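(* Let $\Omega\subset\mathbb{R}^d$ be a bounded Lipschitz domain, $\epsilon>0$, and let $\Omega_1,\dots,\Omega_n\subset\Omega$ be pairwise disjoint cells of equal measure $A>0$. Set $\phi_i = A^{-1/2}\chi_{\Omega_i}$ ($\chi_{\Omega_i}$ the characteristic function) and $X=\mathrm{span}\{\phi_1,\dots,\phi_n\}\subset L^2(\Omega)$. Let $\mathsf{K_h}:X\to L^2(\partial\Omega)$, $f\mapsto u|_{\partial\Omega}$, where $u\in H^1(\Omega)$ is the weak solution of $-\Delta u+\epsilon u = f$ in $\Omega$, $\partial u/\partial\mathbf{n}=0$ on $\partial\Omega$. Assume $\mathsf{K_h}\phi_i\neq c\,\mathsf{K_h}\phi_j$ for all $i\neq j$, $c\in\mathbb{R}$. Let $\mathsf{P}$ be the $L^2$-orthogonal projection of $X$ onto $\mathcal{N}(\mathsf{K_h})^\perp$, $\mathsf{P}^{\mathcal N}=I-\mathsf{P}$, and $\mathsf{W}\phi_i=\|\mathsf{P}\phi_i\|_{L^2(\Omega)}\phi_i$. Fix $j$, let $x_j^*$ be the minimum norm least squares solution of $\mathsf{K_h}x=\mathsf{K_h}\phi_j$, and choose arbitrary points $z_i\in\Omega_i$, $i=1,\dots,n$. Then $$\mathsf{W}^{-1}x_j^* = A^{1/2}\sum_{i=1}^n\frac{(\mathsf{P}\phi_j)(z_i)}{\|\mathsf{P}\phi_i\|_{L^2(\Omega)}}\,\phi_i = A^{1/2}\frac{A^{-1/2}-(\mathsf{P}^{\mathcal N}\phi_j)(z_j)}{\sqrt{1-\|\mathsf{P}^{\mathcal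 N}\phi_j\|^2_{L^2(\Omega)}}}\,\phi_j - A^{1/2}\sum_{i\neq j}\frac{(\mathsf{P}^{\mathcal N}\phi_j)(z_i)}{\sqrt{1-\|\mathsf{P}^{\mathcal N}\phi_i\|^2_{L^2(\Omega)}}}\,\phi_i,$$ and for every $i\neq j$, $$\frac{(\mathsf{P}\phi_j)(z_j)}{\|\mathsf{P}\phi_j\|_{L^2(\Omega)}} > \frac{(\mathsf{P}\phi_j)(z_i)}{\|\mathsf{P}\phi_i\|_{L^2(\Omega)}},\qquad \frac{A^{-1/2}-(\mathsf{P}^{\mathcal N}\phi_j)(z_j)}{\sqrt{1-\|\mathsf{P}^{\mathcal N}\phi_j\|^2_{L^2(\Omega)}}} > \frac{-(\mathsf{P}^{\mathcal N}\phi_j)(z_i)}{\sqrt{1-\|\mathsf{P}^{\mathcal N}\phi_i\|^2_{L^2(\Omega)}}}.$$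
   Context: Elements of $X$ are piecewise constant, constant on each $\Omega_i$, so point values $(\mathsf{P}\phi_j)(z_i)$ are well defined. $\mathcal{N}(\mathsf{K_h})$ is the nullspace of $\mathsf{K_h}$; $\mathbf{n}$ is the outward unit normal. The minimum norm least squares solution of $\mathsf{K_h}x=b$ is $\mathsf{K_h}^\dagger b$ with $\mathsf{K_h}^\dagger$ the Moore–Penrose inverse. *)

theory Defs
  imports "HOL-Analysis.Analysis"
begin

definition lipschitz_domain :: "(real^'d) set \<Rightarrow> bool" where
  "lipschitz_domain \<Omega> \<longleftrightarrow> \<Omega> \<noteq> {} \<and> open \<Omega> \<and> bounded \<Omega> \<and> connected \<Omega> \<and>
     (\<forall>p \<in> frontier \<Omega>. \<exists>r>0. \<exists>e::real^'d. \<exists>g::real^'d \<Rightarrow> real. \<exists>L.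
        norm e = 1 \<and> (\<forall>x y. \<bar>g x - g y\<bar> \<le> L * norm (x - y)) \<and>
        \<Omega> \<inter> ball p r = {x \<in> ball p r. x \<bullet> e < g (x - (x \<bullet> e) *\<^sub>R e)})"

definition L2ip :: "(real^'d) set \<Rightarrow> (real^'d \<Rightarrow> real) \<Rightarrow> (real^'d \<Rightarrow> real) \<Rightarrow> real" where
  "L2ip \<Omega> f g = (LINT x : \<Omega> | lebesgue. f x * g x)"

definition L2norm :: "(real^'d) set \<Rightarrow> (real^'d \<Rightarrow> real) \<Rightarrow> real" where
  "L2norm \<Omega> f = sqrt (L2ip \<Omega> f f)"

definition cellfun :: "real \<Rightarrow> (nat \<Rightarrow> (real^'d) set) \<Rightarrow> nat \<Rightarrow> real^'d \<Rightarrow> real" where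
  "cellfun A cells i = (\<lambda>x. (1 / sqrt A) * indicator (cells i) x)"

definition cellspan :: "real \<Rightarrow> (nat \<Rightarrow> (real^'d) set) \<Rightarrow> nat \<Rightarrow> (real^'d \<Rightarrow> real) set" where
  "cellspan A cells n = {f. \<exists>c::nat \<Rightarrow> real. f = (\<lambda>x. \<Sum>i<n. c i * cellfun A cells i x)}"

definition nullsp :: "(real^'d \<Rightarrow> real) set \<Rightarrow> ((real^'d \<Rightarrow> real) \<Rightarrow> 'b::real_vector)
   \<Rightarrow> (real^'d \<Rightarrow> real) set" where
  "nullsp X K = {x \<in> X. K x = 0}"

definition projP :: "(real^'d) set \<Rightarrow> (real^'d \<Rightarrow> real) set \<Rightarrow> ((real^'d \<Rightarrow> real) \<Rightarrow> 'b::real_vector)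
   \<Rightarrow> (real^'d \<Rightarrow> real) \<Rightarrow> (real^'d \<Rightarrow> real)" where
  "projP \<Omega> X K x = (THE y. y \<in> X \<and> (\<forall>z \<in> nullsp X K. L2ip \<Omega> y z = 0) \<and> (\<lambda>p. x p - y p) \<in> nullsp X K)"

definition projPN :: "(real^'d) set \<Rightarrow> (real^'d \<Rightarrow> real) set \<Rightarrow> ((real^'d \<Rightarrow> real) \<Rightarrow> 'b::real_vector)
   \<Rightarrow> (real^'d \<Rightarrow> real) \<Rightarrow> (real^'d \<Rightarrow> real)" where
  "projPN \<Omega> X K x = (\<lambda>p. x p - projP \<Omega> X K x p)"

text \<open>Weighting operator W, the linear map on X with W \<phi>_i = ||P \<phi>_i|| \<phi>_i
  (coefficients w.r.t. the orthonormal basis \<phi>_i are L^2 inner products).\<close>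
definition weightW :: "(real^'d) set \<Rightarrow> real \<Rightarrow> (nat \<Rightarrow> (real^'d) set) \<Rightarrow> nat
   \<Rightarrow> (real^'d \<Rightarrow> real) set \<Rightarrow> ((real^'d \<Rightarrow> real) \<Rightarrow> 'b::real_vector)
   \<Rightarrow> (real^'d \<Rightarrow> real) \<Rightarrow> (real^'d \<Rightarrow> real)" where
  "weightW \<Omega> A cells n X K x = (\<lambda>p.
     \<Sum>i<n. (L2ip \<Omega> x (cellfun A cells i) * L2norm \<Omega> (projP \<Omega> X K (cellfun A cells i)))
              * cellfun A cells i p)"

definition is_mnls :: "(real^'d) set \<Rightarrow> (real^'d \<Rightarrow> real) set \<Rightarrow> ((real^'d \<Rightarrow> real) \<Rightarrow> 'b::real_normed_vector)
   \<Rightarrow> 'b \<Rightarrow> (real^'d \<Rightarrow> real) \<Rightarrow> bool" where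
  "is_mnls \<Omega> X K b x \<longleftrightarrow> x \<in> X \<and> (\<forall>y \<in> X. norm (K x - b) \<le> norm (K y - b)) \<and>
     (\<forall>y \<in> X. (\<forall>w \<in> X. norm (K y - b) \<le> norm (K w - b)) \<longrightarrow> L2norm \<Omega> x \<le> L2norm \<Omega> y)"

end

theory Submission
  imports Defs
begin

definition ipn :: "nat \<Rightarrow> (nat \<Rightarrow> real) \<Rightarrow> (nat \<Rightarrow> real) \<Rightarrow> real" where
  "ipn n c d = (\<Sum>i<n. c i * d i)"

definition fnc :: "real \<Rightarrow> (nat \<Rightarrow> (real^'d) set) \<Rightarrow> nat \<Rightarrow> (nat \<Rightarrow> real) \<Rightarrow> real^'d \<Rightarrow> real" where
  "fnc A cells n c = (\<lambda>x. \<Sum>i<n. c i * cellfun A cells i x)"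

lemma ipn_sym: "ipn n c d = ipn n d c"
  unfolding ipn_def by (simp add: mult.commute)

lemma ipn_lin: "ipn n (\<lambda>i. a * c i + b * d i) e = a * ipn n c e + b * ipn n d e"
  unfolding ipn_def by (simp add: algebra_simps sum.distrib sum_distrib_left)

lemma ipn_diff: "ipn n (\<lambda>i. c i - d i) e = ipn n c e - ipn n d e"
  unfolding ipn_def by (simp add: algebra_simps sum_subtractf)

lemma ipn_diff2: "ipn n e (\<lambda>i. c i - d i) = ipn n e c - ipn n e d"
  unfolding ipn_def by (simp add: algebra_simps sum_subtractf)

lemma ipn_scale: "ipn n (\<lambda>i. a * c i) e = a * ipn n c e"
  unfolding ipn_def by (simp add: algebra_simps sum_distrib_left)

lemma ipn_sum: "ipn n (\<lambda>i. \<Sum>l<m. a l * w l i) e = (\<Sum>l<m. a l * ipn n (w l) e)"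
proof -
  have "ipn n (\<lambda>i. \<Sum>l<m. a l * w l i) e = (\<Sum>i<n. \<Sum>l<m. a l * (w l i * e i))"
    unfolding ipn_def by (simp add: sum_distrib_right mult.assoc)
  also have "\<dots> = (\<Sum>l<m. \<Sum>i<n. a l * (w l i * e i))" by (rule sum.swap)
  also have "\<dots> = (\<Sum>l<m. a l * ipn n (w l) e)" unfolding ipn_def by (simp add: sum_distrib_left)
  finally show ?thesis .
qed

lemma ipn_sum2: "ipn n e (\<lambda>i. \<Sum>l<m. a l * w l i) = (\<Sum>l<m. a l * ipn n e (w l))"
  by (simp only: ipn_sym[of n e] ipn_sum)

lemma ipn_nonneg: "ipn n c c \<ge> 0"
  unfolding ipn_def by (simp add: sum_nonneg)

lemma ipn_zero: "ipn n c c = 0 \<Longrightarrow> i < n \<Longrightarrow> c i = 0"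
  unfolding ipn_def by (subst (asm) sum_nonneg_eq_0_iff) auto

lemma ipn_cong: "(\<And>i. i < n \<Longrightarrow> c i = c' i) \<Longrightarrow> (\<And>i. i < n \<Longrightarrow> d i = d' i) \<Longrightarrow> ipn n c d = ipn n c' d'"
  unfolding ipn_def by (rule sum.cong) auto

lemma GS: fixes m :: nat and w :: "nat \<Rightarrow> nat \<Rightarrow> real" shows "\<forall>x. \<exists>a. \<forall>k<m. ipn n (\<lambda>i. x i - (\<Sum>l<m. a l * w l i)) (w k) = 0"
proof (induction m)
  case 0
  then show ?case by simp
next
  case (Suc m)
  show ?case
  proof
    fix x
    obtain a where ha: "\<forall>k<m. ipn n (\<lambda>i. x i - (\<Sum>l<m. a l * w l i)) (w k) = 0"
      using Suc.IH by blast
    obtain b where hb: "\<forall>k<m. ipn n (\<lambda>i. w m i - (\<Sum>l<m. b l * w l i)) (w k) = 0"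
      using Suc.IH by blast
    define r where "r = (\<lambda>i. w m i - (\<Sum>l<m. b l * w l i))"
    define u where "u = (\<lambda>i. x i - (\<Sum>l<m. a l * w l i))"
    have hr: "\<forall>k<m. ipn n r (w k) = 0" using hb r_def by simp
    have hu: "\<forall>k<m. ipn n u (w k) = 0" using ha u_def by simp
    have wm: "w m = (\<lambda>i. r i + (\<Sum>l<m. b l * w l i))" by (simp add: r_def)
    show "\<exists>a. \<forall>k<Suc m. ipn n (\<lambda>i. x i - (\<Sum>l<Suc m. a l * w l i)) (w k) = 0"
    proof (cases "ipn n r r = 0")
      case True
      have r0: "\<And>i. i < n \<Longrightarrow> r i = 0" using ipn_zero True by blast
      define a' where "a' = a(m := 0)"
      have e: "(\<lambda>i. x i - (\<Sum>l<Suc m. a' l * w l i)) = u"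
        by (simp add: a'_def u_def)
      have "ipn n u (w m) = ipn n u (\<lambda>i. \<Sum>l<m. b l * w l i)"
        by (rule ipn_cong) (auto simp: wm r0)
      also have "\<dots> = 0" using hu by (simp add: ipn_sum2)
      finally have "ipn n u (w m) = 0" .
      then show ?thesis using hu e by (metis less_Suc_eq)
    next
      case False
      define t where "t = ipn n u r / ipn n r r"
      define a' where "a' = (\<lambda>l. a l - t * b l)(m := t)"
      have e: "(\<lambda>i. x i - (\<Sum>l<Suc m. a' l * w l i)) = (\<lambda>i. 1 * u i + (- t) * r i)"
      proof (rule ext)
        fix i
        have "(\<Sum>l<Suc m. a' l * w l i) = (\<Sum>l<m. (a l - t * b l) * w l i) + t * w m i"
          by (simp add: a'_def)
        also have "\<dots> = (\<Sum>l<m. a l * w l i) - t * (\<Sum>l<m. b l * w l i) + t * w m i"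
          by (simp add: algebra_simps sum_subtractf sum_distrib_left)
        finally show "x i - (\<Sum>l<Suc m. a' l * w l i) = 1 * u i + (- t) * r i"
          by (simp add: u_def r_def algebra_simps)
      qed
      have k1: "ipn n (\<lambda>i. 1 * u i + (- t) * r i) (w k) = 0" if "k < m" for k
        unfolding ipn_lin using hu hr that by simp
      have k2: "ipn n (\<lambda>i. 1 * u i + (- t) * r i) (w m) = 0"
      proof -
        have "ipn n (\<lambda>i. 1 * u i + (- t) * r i) (w m) = ipn n (w m) (\<lambda>i. 1 * u i + (- t) * r i)"
          by (rule ipn_sym)
        also have "\<dots> = ipn n (\<lambda>i. 1 * r i + 1 * (\<Sum>l<m. b l * w l i)) (\<lambda>i. 1 * u i + (- t) * r i)"
          by (simp add: wm)
        also have "\<dots> = 1 * ipn n r (\<lambda>i. 1 * u i + (- t) * r i) + 1 * ipn n (\<lambda>i. \<Sum>l<m. b l * w l i) (\<lambda>i. 1 * u i + (- t) * r i)"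
          by (rule ipn_lin)
        also have "\<dots> = ipn n r (\<lambda>i. 1 * u i + (- t) * r i) + (\<Sum>l<m. b l * ipn n (w l) (\<lambda>i. 1 * u i + (- t) * r i))"
          unfolding ipn_sum by simp
        also have "(\<Sum>l<m. b l * ipn n (w l) (\<lambda>i. 1 * u i + (- t) * r i)) = 0"
          using k1 by (simp add: ipn_sym[of n "w _"])
        also have "ipn n r (\<lambda>i. 1 * u i + (- t) * r i) = ipn n u r - t * ipn n r r"
          by (subst ipn_sym, unfold ipn_lin, simp add: ipn_sym[of n r u])
        also have "\<dots> = 0" using False by (simp add: t_def)
        finally show ?thesis by simp
      qed
      show ?thesis using k1 k2 e by (metis less_Suc_eq)
    qed
  qed
qed

locale cs =
  fixes \<Omega> :: "(real^'d) set" and cells :: "nat \<Rightarrow> (real^'d) set" and n :: nat and A :: real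
    and K :: "(real^'d \<Rightarrow> real) \<Rightarrow> 'b::real_inner" and z :: "nat \<Rightarrow> real^'d"
  assumes cells_sub: "\<forall>i<n. cells i \<subseteq> \<Omega>"
    and cells_meas: "\<forall>i<n. cells i \<in> sets lebesgue \<and> measure lebesgue (cells i) = A"
    and cells_disj: "\<forall>i<n. \<forall>k<n. i \<noteq> k \<longrightarrow> cells i \<inter> cells k = {}"
    and A_pos: "A > 0"
    and K_lin: "\<forall>x\<in>cellspan A cells n. \<forall>y\<in>cellspan A cells n. \<forall>a b. K (\<lambda>p. a * x p + b * y p) = a *\<^sub>R K x + b *\<^sub>R K y"
    and z: "\<forall>i<n. z i \<in> cells i"
begin

abbreviation "F \<equiv> fnc A cells n"
abbreviation "X \<equiv> cellspan A cells n"

definition ev :: "nat \<Rightarrow> nat \<Rightarrow> real" where "ev i = (\<lambda>k. if k = i then 1 else 0)"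
definition Kc :: "(nat \<Rightarrow> real) \<Rightarrow> 'b" where "Kc c = (\<Sum>i<n. c i *\<^sub>R K (cellfun A cells i))"
definition wv :: "nat \<Rightarrow> nat \<Rightarrow> real" where "wv k = (\<lambda>i. inner (K (cellfun A cells i)) (K (cellfun A cells k)))"

lemma sqA: "sqrt A > 0" "sqrt A * sqrt A = A" using A_pos by auto

lemma ph_at: assumes "i < n" "k < n" "x \<in> cells k" shows "cellfun A cells i x = (if i = k then 1 / sqrt A else 0)"
proof -
  have "i \<noteq> k \<Longrightarrow> x \<notin> cells i" using cells_disj assms by blast
  then show ?thesis using assms by (auto simp: cellfun_def indicator_def)
qed

lemma ph_out: "(\<forall>k<n. x \<notin> cells k) \<Longrightarrow> i < n \<Longrightarrow> cellfun A cells i x = 0"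
  by (auto simp: cellfun_def)

lemma F_at: assumes "k < n" "x \<in> cells k" shows "F c x = c k / sqrt A"
proof -
  have "F c x = (\<Sum>i<n. c i * (if i = k then 1 / sqrt A else 0))"
    unfolding fnc_def using assms by (intro sum.cong) (auto simp: ph_at)
  also have "\<dots> = c k / sqrt A" using assms by (simp add: if_distrib cong: if_cong)
  finally show ?thesis .
qed

lemma F_z: "k < n \<Longrightarrow> F c (z k) = c k / sqrt A"
  using F_at z by blast

lemma X_iff: "f \<in> X \<longleftrightarrow> (\<exists>c. f = F c)"
  by (simp add: cellspan_def fnc_def)

lemma F_in[simp]: "F c \<in> X"
  using X_iff by blast

lemma F_eq: "F c = F d \<longleftrightarrow> (\<forall>i<n. c i = d i)"
proof
  assume h: "F c = F d"
  show "\<forall>i<n. c i = d i"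
  proof (intro allI impI)
    fix i assume "i < n"
    then have "c i / sqrt A = d i / sqrt A" using F_z h by metis
    then show "c i = d i" using sqA by simp
  qed
next
  assume "\<forall>i<n. c i = d i"
  then show "F c = F d" unfolding fnc_def by (intro ext sum.cong) auto
qed

lemma F_lin: "(\<lambda>p. a * F c p + b * F d p) = F (\<lambda>i. a * c i + b * d i)"
  by (rule ext) (simp add: fnc_def algebra_simps sum.distrib sum_distrib_left)

lemma F_diff: "(\<lambda>p. F c p - F d p) = F (\<lambda>i. c i - d i)"
  by (rule ext) (simp add: fnc_def algebra_simps sum_subtractf)

lemma ph_F: assumes "i < n" shows "cellfun A cells i = F (ev i)"
proof (rule ext)
  fix x
  have "(\<lambda>k. ev i k * cellfun A cells k x) = (\<lambda>k. if k = i then cellfun A cells i x else 0)"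
    by (auto simp: ev_def)
  have "F (ev i) x = sum (\<lambda>k. ev i k * cellfun A cells k x) {..<n}" by (simp add: fnc_def)
  also have "\<dots> = sum (\<lambda>k. if k = i then cellfun A cells i x else 0) {..<n}" by (simp only: \<open>(\<lambda>k. ev i k * cellfun A cells k x) = _\<close>)
  also have "\<dots> = cellfun A cells i x" using assms by simp
  finally show "cellfun A cells i x = F (ev i) x" by simp
qed

lemma ph_in: assumes "i < n" shows "cellfun A cells i \<in> X"
proof -
  have "cellfun A cells i = F (ev i)" using ph_F[OF assms] .
  then show ?thesis by (simp only: F_in)
qed

lemma emeas_fin: assumes "i < n" shows "emeasure lebesgue (cells i) < \<infinity>"
proof -
  have "measure lebesgue (cells i) \<noteq> 0" using cells_meas A_pos assms by auto
  then have "emeasure lebesgue (cells i) \<noteq> top" using measure_zero_top by blast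
  then show ?thesis by (simp add: less_top[symmetric])
qed

lemma L2ip_F: "L2ip \<Omega> (F c) (F d) = ipn n c d"
proof -
  have pt: "indicator \<Omega> x * (F c x * F d x) = (\<Sum>i<n. (c i * d i / A) * indicator (cells i) x)" for x
  proof (cases "\<exists>k<n. x \<in> cells k")
    case True
    then obtain k where k: "k < n" "x \<in> cells k" by blast
    then have "x \<in> \<Omega>" using cells_sub by blast
    have "(\<Sum>i<n. (c i * d i / A) * indicator (cells i) x) = (\<Sum>i<n. (c i * d i / A) * (if i = k then 1 else 0))"
      using k cells_disj by (intro sum.cong) (auto simp: indicator_def)
    also have "\<dots> = c k * d k / A" using k by (simp add: if_distrib cong: if_cong)
    finally have r: "(\<Sum>i<n. (c i * d i / A) * indicator (cells i) x) = c k * d k / A" .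
    have "F c x * F d x = c k * d k / (sqrt A * sqrt A)" by (simp add: F_at[OF k])
    then have "F c x * F d x = c k * d k / A" using sqA by simp
    then show ?thesis using r \<open>x \<in> \<Omega>\<close> by simp
  next
    case False
    then have "F c x = 0" by (simp add: fnc_def ph_out)
    moreover have "(\<Sum>i<n. (c i * d i / A) * indicator (cells i) x) = 0"
      using False by (intro sum.neutral) auto
    ultimately show ?thesis by simp
  qed
  have "L2ip \<Omega> (F c) (F d) = integral\<^sup>L lebesgue (\<lambda>x. \<Sum>i<n. (c i * d i / A) * indicator (cells i) x)"
    unfolding L2ip_def set_lebesgue_integral_def using pt by simp
  also have "\<dots> = (\<Sum>i<n. integral\<^sup>L lebesgue (\<lambda>x. (c i * d i / A) * indicator (cells i) x))"
  proof -
    have "integrable lebesgue (\<lambda>x. (c i * d i / A) * indicator (cells i) x)" if "i \<in> {..<n}" for i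
      using cells_meas emeas_fin that by (intro integrable_mult_right integrable_real_indicator) auto
    then show ?thesis using Bochner_Integration.integral_sum[where I="{..<n}" and M=lebesgue and f="\<lambda>i x. (c i * d i / A) * indicator (cells i) x"] by simp
  qed
  also have "\<dots> = (\<Sum>i<n. (c i * d i / A) * A)"
    using cells_meas by (intro sum.cong) auto
  also have "\<dots> = ipn n c d" unfolding ipn_def using A_pos by simp
  finally show ?thesis .
qed

lemma K0: "K (\<lambda>p. 0) = 0"
proof -
  have "F (\<lambda>i. 0) = (\<lambda>p::real^'d. 0::real)" by (simp add: fnc_def)
  then have h: "(\<lambda>p::real^'d. 0::real) \<in> X" by (subst (asm) eq_commute) (metis F_in)
  have "K (\<lambda>p. 1 * 0 + 1 * 0) = 1 *\<^sub>R K (\<lambda>p. 0) + 1 *\<^sub>R K (\<lambda>p. 0)"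
    by (rule K_lin[rule_format, OF h h])
  then show ?thesis by simp
qed

lemma K_F: "K (F c) = Kc c"
proof -
  have "\<forall>m. m \<le> n \<longrightarrow> K (F (\<lambda>i. if i < m then c i else 0)) = (\<Sum>i<m. c i *\<^sub>R K (cellfun A cells i))"
  proof (intro allI)
    fix m show "m \<le> n \<longrightarrow> K (F (\<lambda>i. if i < m then c i else 0)) = (\<Sum>i<m. c i *\<^sub>R K (cellfun A cells i))"
    proof (induction m)
      case 0
      have "F (\<lambda>i. if i < 0 then c i else 0) = (\<lambda>p. 0)" by (simp add: fnc_def)
      then show ?case using K0 by simp
    next
      case (Suc m)
      show ?case
      proof
        assume "Suc m \<le> n"
        then have mn: "m < n" by simp
        have "F (\<lambda>i. if i < Suc m then c i else 0) = F (\<lambda>i. 1 * (if i < m then c i else 0) + c m * ev m i)"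
          by (subst F_eq) (auto simp: ev_def less_Suc_eq)
        also have "\<dots> = (\<lambda>p. 1 * F (\<lambda>i. if i < m then c i else 0) p + c m * cellfun A cells m p)"
          by (simp only: ph_F[OF mn] F_lin)
        finally have e: "F (\<lambda>i. if i < Suc m then c i else 0) = (\<lambda>p. 1 * F (\<lambda>i. if i < m then c i else 0) p + c m * cellfun A cells m p)" .
        have k: "K (\<lambda>p. 1 * F (\<lambda>i. if i < m then c i else 0) p + c m * cellfun A cells m p) = 1 *\<^sub>R K (F (\<lambda>i. if i < m then c i else 0)) + c m *\<^sub>R K (cellfun A cells m)"
          by (rule K_lin[rule_format]) (use ph_in[OF mn] in auto)
        have "K (F (\<lambda>i. if i < Suc m then c i else 0)) = 1 *\<^sub>R K (F (\<lambda>i. if i < m then c i else 0)) + c m *\<^sub>R K (cellfun A cells m)"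
          by (simp only: e k)
        then show "K (F (\<lambda>i. if i < Suc m then c i else 0)) = (\<Sum>i<Suc m. c i *\<^sub>R K (cellfun A cells i))"
          using Suc.IH mn by simp
      qed
    qed
  qed
  then have "K (F (\<lambda>i. if i < n then c i else 0)) = Kc c" by (simp add: Kc_def)
  moreover have "F (\<lambda>i. if i < n then c i else 0) = F c" by (subst F_eq) auto
  ultimately show ?thesis by simp
qed

lemma Kc_lin: "Kc (\<lambda>i. a * c i + b * d i) = a *\<^sub>R Kc c + b *\<^sub>R Kc d"
  by (simp add: Kc_def scaleR_add_left sum.distrib scaleR_sum_right)

lemma Kc_diff: "Kc (\<lambda>i. c i - d i) = Kc c - Kc d"
  by (simp add: Kc_def scaleR_diff_left sum_subtractf)

lemma Kc_scale: "Kc (\<lambda>i. a * c i) = a *\<^sub>R Kc c"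
  by (simp add: Kc_def scaleR_sum_right)

lemma Kc_cong: "(\<And>i. i < n \<Longrightarrow> c i = d i) \<Longrightarrow> Kc c = Kc d"
  unfolding Kc_def by (rule sum.cong) auto

lemma Kc_ev: "i < n \<Longrightarrow> Kc (ev i) = K (cellfun A cells i)"
  using K_F ph_F by metis

lemma ip_wv: "ipn n c (wv k) = inner (Kc c) (K (cellfun A cells k))"
  by (simp add: ipn_def wv_def Kc_def inner_sum_left)

lemma Kc_zero_iff: "Kc c = 0 \<longleftrightarrow> (\<forall>k<n. ipn n c (wv k) = 0)"
proof
  assume "\<forall>k<n. ipn n c (wv k) = 0"
  then have "\<forall>k<n. inner (Kc c) (K (cellfun A cells k)) = 0" using ip_wv by simp
  then have "inner (Kc c) (Kc c) = 0"
    by (simp add: Kc_def inner_sum_right)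
  then show "Kc c = 0" by simp
qed (simp add: ip_wv)

lemma null_iff: "f \<in> nullsp X K \<longleftrightarrow> (\<exists>c. f = F c \<and> Kc c = 0)"
  by (auto simp: nullsp_def X_iff K_F)

lemma proj: "\<exists>q. projP \<Omega> X K (F c) = F q \<and> Kc (\<lambda>i. c i - q i) = 0 \<and> (\<forall>e. Kc e = 0 \<longrightarrow> ipn n q e = 0)"
proof -
  obtain a where ha: "\<forall>k<n. ipn n (\<lambda>i. c i - (\<Sum>l<n. a l * wv l i)) (wv k) = 0"
    using GS[of n n wv] by blast
  define q where "q = (\<lambda>i. \<Sum>l<n. a l * wv l i)"
  have h1: "Kc (\<lambda>i. c i - q i) = 0" unfolding Kc_zero_iff using ha q_def by simp
  have h2: "ipn n q e = 0" if "Kc e = 0" for e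
  proof -
    have z: "ipn n (wv l) e = 0" if "l < n" for l
    proof -
      have "ipn n e (wv l) = 0" using \<open>Kc e = 0\<close> that unfolding Kc_zero_iff by blast
      then show ?thesis by (simp add: ipn_sym)
    qed
    have "ipn n q e = (\<Sum>l<n. a l * ipn n (wv l) e)" unfolding q_def by (rule ipn_sum)
    also have "\<dots> = 0" using z by simp
    finally show ?thesis .
  qed
  let ?Q = "\<lambda>y. y \<in> X \<and> (\<forall>w \<in> nullsp X K. L2ip \<Omega> y w = 0) \<and> (\<lambda>p. F c p - y p) \<in> nullsp X K"
  have q1: "\<forall>w \<in> nullsp X K. L2ip \<Omega> (F q) w = 0"
  proof
    fix w assume "w \<in> nullsp X K"
    then obtain e where "w = F e" "Kc e = 0" unfolding null_iff by blast
    then show "L2ip \<Omega> (F q) w = 0" using h2 by (simp add: L2ip_F)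
  qed
  have q2: "(\<lambda>p. F c p - F q p) \<in> nullsp X K"
    unfolding F_diff null_iff using h1 by blast
  have "?Q (F q)" using q1 q2 F_in by blast
  moreover have "y = F q" if Qy: "?Q y" for y
  proof -
    from Qy have yX: "y \<in> X" and yo: "\<forall>w \<in> nullsp X K. L2ip \<Omega> y w = 0"
      and yn: "(\<lambda>p. F c p - y p) \<in> nullsp X K" by auto
    obtain d where d: "y = F d" using yX unfolding X_iff by blast
    obtain e where e: "(\<lambda>p. F c p - y p) = F e" "Kc e = 0" using yn unfolding null_iff by blast
    have "F e = F (\<lambda>i. c i - d i)" using e(1) unfolding d F_diff by simp
    then have "\<forall>i<n. e i = c i - d i" unfolding F_eq .
    then have "Kc e = Kc (\<lambda>i. c i - d i)" by (intro Kc_cong) auto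
    then have kd: "Kc (\<lambda>i. c i - d i) = 0" using e(2) by simp
    have "Kc (\<lambda>i. q i - d i) = Kc (\<lambda>i. c i - d i) - Kc (\<lambda>i. c i - q i)"
      unfolding Kc_diff[symmetric] by (rule arg_cong[where f=Kc]) auto
    then have kqd: "Kc (\<lambda>i. q i - d i) = 0" using kd h1 by simp
    then have "F (\<lambda>i. q i - d i) \<in> nullsp X K" unfolding null_iff by blast
    then have "L2ip \<Omega> (F d) (F (\<lambda>i. q i - d i)) = 0" using yo unfolding d by blast
    then have i1: "ipn n d (\<lambda>i. q i - d i) = 0" by (simp only: L2ip_F)
    have i2: "ipn n q (\<lambda>i. q i - d i) = 0" using h2 kqd by blast
    have z0: "ipn n (\<lambda>i. q i - d i) (\<lambda>i. q i - d i) = 0"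
      using i1 i2 ipn_diff[of n q d "\<lambda>i. q i - d i"] by linarith
    have "\<forall>i<n. q i = d i"
    proof (intro allI impI)
      fix i assume "i < n"
      from ipn_zero[OF z0 this] have "q i - d i = 0" .
      then show "q i = d i" by (rule eq_iff_diff_eq_0[THEN iffD2])
    qed
    then have "F q = F d" unfolding F_eq .
    then show ?thesis unfolding d by (rule sym)
  qed
  ultimately have "projP \<Omega> X K (F c) = F q"
    unfolding projP_def by (rule the_equality)
  then show ?thesis
    apply (intro exI[of _ q] conjI allI impI)
    using h1 h2 by auto
qed

end

lemma ipn_expand: "ipn n c c = ipn n p p + ipn n (\<lambda>i. c i - p i) (\<lambda>i. c i - p i) + 2 * ipn n p (\<lambda>i. c i - p i)"
proof -
  have "ipn n c c = (\<Sum>i<n. p i * p i + (c i - p i) * (c i - p i) + 2 * (p i * (c i - p i)))"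
    unfolding ipn_def by (rule sum.cong) (auto simp: algebra_simps)
  then show ?thesis unfolding ipn_def by (simp add: sum.distrib sum_distrib_left)
qed

lemma ipn_expand2: "ipn n (\<lambda>k. b * u k - a * v k) (\<lambda>k. b * u k - a * v k) = b * b * ipn n u u - 2 * a * b * ipn n u v + a * a * ipn n v v"
proof -
  have "ipn n (\<lambda>k. b * u k - a * v k) (\<lambda>k. b * u k - a * v k) = (\<Sum>k<n. b * b * (u k * u k) - 2 * a * b * (u k * v k) + a * a * (v k * v k))"
    unfolding ipn_def by (rule sum.cong) (auto simp: algebra_simps)
  then show ?thesis unfolding ipn_def by (simp add: sum.distrib sum_subtractf sum_distrib_left)
qed

lemma strict_cs:
  assumes a: "a > 0" and b: "b > 0" and uu: "ipn n u u = a * a" and vv: "ipn n v v = b * b"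
    and np: "\<not> (\<forall>k<n. b * u k = a * v k)"
  shows "ipn n u v < a * b"
proof (rule ccontr)
  assume "\<not> ipn n u v < a * b"
  then have ge: "ipn n u v \<ge> a * b" by simp
  have "ipn n (\<lambda>k. b * u k - a * v k) (\<lambda>k. b * u k - a * v k) = 2 * (a * b) * (a * b - ipn n u v)"
    unfolding ipn_expand2 uu vv by (simp add: algebra_simps)
  also have "\<dots> \<le> 0" using ge a b by (simp add: mult_nonneg_nonpos)
  finally have "ipn n (\<lambda>k. b * u k - a * v k) (\<lambda>k. b * u k - a * v k) = 0"
    using ipn_nonneg[of n "\<lambda>k. b * u k - a * v k"] by linarith
  then have "\<forall>k<n. b * u k = a * v k"
  proof (intro allI impI)
    fix k assume "ipn n (\<lambda>k. b * u k - a * v k) (\<lambda>k. b * u k - a * v k) = 0" "k < n"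
    from ipn_zero[OF this] show "b * u k = a * v k" by simp
  qed
  then show False using np by blast
qed

context cs
begin

abbreviation "ph \<equiv> cellfun A cells"
abbreviation "P \<equiv> projP \<Omega> X K"
abbreviation "PN \<equiv> projPN \<Omega> X K"
abbreviation "W \<equiv> weightW \<Omega> A cells n X K"

definition pv :: "nat \<Rightarrow> nat \<Rightarrow> real" where
  "pv i = (SOME q. P (F (ev i)) = F q \<and> Kc (\<lambda>k. ev i k - q k) = 0 \<and> (\<forall>e. Kc e = 0 \<longrightarrow> ipn n q e = 0))"

lemma pv_spec: "P (F (ev i)) = F (pv i) \<and> Kc (\<lambda>k. ev i k - pv i k) = 0 \<and> (\<forall>e. Kc e = 0 \<longrightarrow> ipn n (pv i) e = 0)"
  unfolding pv_def by (rule someI_ex[OF proj])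

lemma P_ph: "i < n \<Longrightarrow> P (ph i) = F (pv i)"
  using pv_spec ph_F by metis

lemma PN_ph: assumes "i < n" shows "PN (ph i) = F (\<lambda>k. ev i k - pv i k)"
proof -
  have "PN (ph i) = (\<lambda>p. ph i p - F (pv i) p)"
    unfolding projPN_def P_ph[OF assms] ..
  also have "\<dots> = (\<lambda>p. F (ev i) p - F (pv i) p)" by (simp only: ph_F[OF assms])
  finally have "PN (ph i) = (\<lambda>p. F (ev i) p - F (pv i) p)" .
  then show ?thesis by (simp only: F_diff)
qed

lemma Kc_pv: assumes "i < n" shows "Kc (pv i) = K (ph i)"
proof -
  have "Kc (ev i) - Kc (pv i) = 0" using pv_spec Kc_diff by metis
  then show ?thesis using Kc_ev[OF assms] by simp
qed

lemma ipn_ev: "i < n \<Longrightarrow> ipn n c (ev i) = c i"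
proof -
  assume i: "i < n"
  have "(\<lambda>k. c k * ev i k) = (\<lambda>k. if k = i then c i else 0)" by (auto simp: ev_def)
  have "ipn n c (ev i) = sum (\<lambda>k. c k * ev i k) {..<n}" by (simp add: ipn_def)
  also have "\<dots> = sum (\<lambda>k. if k = i then c i else 0) {..<n}" by (simp only: \<open>(\<lambda>k. c k * ev i k) = _\<close>)
  also have "\<dots> = c i" using i by simp
  finally show ?thesis .
qed

lemma ipn_pv_pv: assumes "i < n" shows "ipn n (pv j) (pv i) = pv j i"
proof -
  have "ipn n (pv j) (\<lambda>k. ev i k - pv i k) = 0" using pv_spec[of j] pv_spec[of i] by blast
  then have "ipn n (pv j) (ev i) - ipn n (pv j) (pv i) = 0" by (simp only: ipn_diff2)
  then show ?thesis using ipn_ev[OF assms] by simp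
qed

lemma L2n_P: assumes "i < n" shows "L2norm \<Omega> (P (ph i)) = sqrt (pv i i)"
  unfolding L2norm_def P_ph[OF assms] L2ip_F ipn_pv_pv[OF assms] ..

lemma L2n_PN: assumes "i < n" shows "(L2norm \<Omega> (PN (ph i)))\<^sup>2 = 1 - pv i i"
proof -
  have nn: "ipn n (\<lambda>k. ev i k - pv i k) (\<lambda>k. ev i k - pv i k) \<ge> 0" by (rule ipn_nonneg)
  have "ipn n (\<lambda>k. ev i k - pv i k) (\<lambda>k. ev i k - pv i k)
      = ipn n (ev i) (\<lambda>k. ev i k - pv i k) - ipn n (pv i) (\<lambda>k. ev i k - pv i k)" by (rule ipn_diff)
  also have "ipn n (pv i) (\<lambda>k. ev i k - pv i k) = 0" using pv_spec[of i] by blast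
  also have "ipn n (ev i) (\<lambda>k. ev i k - pv i k) = ipn n (ev i) (ev i) - ipn n (ev i) (pv i)" by (rule ipn_diff2)
  also have "ipn n (ev i) (ev i) = 1" using ipn_ev[OF assms] by (simp add: ev_def)
  also have "ipn n (ev i) (pv i) = pv i i" using ipn_ev[OF assms, of "pv i"] ipn_sym by metis
  finally have e: "ipn n (\<lambda>k. ev i k - pv i k) (\<lambda>k. ev i k - pv i k) = 1 - pv i i" by simp
  show ?thesis unfolding L2norm_def PN_ph[OF assms] L2ip_F using nn e by simp
qed

lemma pv_pos: assumes "i < n" and nz: "K (ph i) \<noteq> 0" shows "pv i i > 0"
proof -
  have ge: "pv i i \<ge> 0" using ipn_nonneg[of n "pv i"] ipn_pv_pv[OF assms(1), of i] by simp
  show ?thesis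
  proof (rule ccontr)
    assume "\<not> pv i i > 0"
    then have "ipn n (pv i) (pv i) = 0" using ge ipn_pv_pv[OF assms(1), of i] by simp
    then have "\<forall>k<n. pv i k = 0" using ipn_zero[of n "pv i"] by blast
    then have "Kc (pv i) = Kc (\<lambda>k. 0)" by (intro Kc_cong) auto
    also have "\<dots> = 0" by (simp add: Kc_def)
    finally show False using Kc_pv[OF assms(1)] nz by simp
  qed
qed

end

context cs
begin

lemma decomp:
  assumes j: "j < n" and Kc: "Kc c = K (ph j)"
  shows "ipn n c c = ipn n (pv j) (pv j) + ipn n (\<lambda>i. c i - pv j i) (\<lambda>i. c i - pv j i)"
proof -
  have "Kc (\<lambda>i. c i - pv j i) = Kc c - Kc (pv j)" by (rule Kc_diff)
  also have "\<dots> = 0" using Kc Kc_pv[OF j] by simp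
  finally have "ipn n (pv j) (\<lambda>i. c i - pv j i) = 0" using pv_spec[of j] by blast
  then show ?thesis using ipn_expand[of n c "pv j"] by simp
qed

lemma W_F: "W (F c) = F (\<lambda>i. c i * L2norm \<Omega> (P (ph i)))"
proof (rule ext)
  fix p
  have "W (F c) p = (\<Sum>i<n. (L2ip \<Omega> (F c) (ph i) * L2norm \<Omega> (P (ph i))) * ph i p)"
    by (simp add: weightW_def)
  also have "\<dots> = (\<Sum>i<n. (c i * L2norm \<Omega> (P (ph i))) * ph i p)"
  proof (rule sum.cong)
    fix i assume "i \<in> {..<n}"
    then have i: "i < n" by simp
    have "L2ip \<Omega> (F c) (ph i) = c i" unfolding ph_F[OF i] L2ip_F by (rule ipn_ev[OF i])
    then show "(L2ip \<Omega> (F c) (ph i) * L2norm \<Omega> (P (ph i))) * ph i p = (c i * L2norm \<Omega> (P (ph i))) * ph i p"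
      by simp
  qed simp
  also have "\<dots> = F (\<lambda>i. c i * L2norm \<Omega> (P (ph i))) p" by (simp add: fnc_def)
  finally show "W (F c) p = F (\<lambda>i. c i * L2norm \<Omega> (P (ph i))) p" .
qed

lemma main:
  assumes K_nonpar: "\<forall>i<n. \<forall>k<n. i \<noteq> k \<longrightarrow> (\<forall>c::real. K (ph i) \<noteq> c *\<^sub>R K (ph k))"
    and K_nz: "\<forall>i<n. K (ph i) \<noteq> 0"
    and j: "j < n"
  shows "(\<exists>!x. is_mnls \<Omega> X K (K (ph j)) x) \<and>
    (\<forall>xs. is_mnls \<Omega> X K (K (ph j)) xs \<longrightarrow>
       the_inv_into X W xs =
         (\<lambda>p. sqrt A * (\<Sum>i<n. (P (ph j) (z i) / L2norm \<Omega> (P (ph i))) * ph i p)) \<and>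
       (\<lambda>p. sqrt A * (\<Sum>i<n. (P (ph j) (z i) / L2norm \<Omega> (P (ph i))) * ph i p)) =
         (\<lambda>p. sqrt A * (((1 / sqrt A - PN (ph j) (z j)) / sqrt (1 - (L2norm \<Omega> (PN (ph j)))\<^sup>2)) * ph j p)
         - sqrt A * (\<Sum>i\<in>{..<n} - {j}.
              (PN (ph j) (z i) / sqrt (1 - (L2norm \<Omega> (PN (ph i)))\<^sup>2)) * ph i p))) \<and>
    (\<forall>i<n. i \<noteq> j \<longrightarrow>
       P (ph j) (z j) / L2norm \<Omega> (P (ph j)) > P (ph j) (z i) / L2norm \<Omega> (P (ph i)) \<and>
       (1 / sqrt A - PN (ph j) (z j)) / sqrt (1 - (L2norm \<Omega> (PN (ph j)))\<^sup>2)
         > - PN (ph j) (z i) / sqrt (1 - (L2norm \<Omega> (PN (ph i)))\<^sup>2))"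
proof -
  have spos: "L2norm \<Omega> (P (ph i)) > 0" if "i < n" for i
    using L2n_P[OF that] pv_pos[OF that] K_nz that by simp
  have sq1: "sqrt (1 - (L2norm \<Omega> (PN (ph i)))\<^sup>2) = L2norm \<Omega> (P (ph i))" if "i < n" for i
    using L2n_PN[OF that] L2n_P[OF that] by simp
  have Pz: "P (ph j) (z i) = pv j i / sqrt A" if "i < n" for i
    using P_ph[OF j] F_z[OF that] by simp
  have phz: "ph j (z i) = (if j = i then 1 / sqrt A else 0)" if "i < n" for i
    using ph_at[OF j that] z that by blast
  have PNz: "PN (ph j) (z i) = ph j (z i) - P (ph j) (z i)" for i
    by (simp add: projPN_def)
  have KFpv: "K (F (pv j)) = K (ph j)" using K_F Kc_pv[OF j] by simp
  have L2F: "L2norm \<Omega> (F c) = sqrt (ipn n c c)" for c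
    by (simp add: L2norm_def L2ip_F)
  have mn: "is_mnls \<Omega> X K (K (ph j)) x \<longleftrightarrow> x = F (pv j)" for x
  proof
    assume h: "is_mnls \<Omega> X K (K (ph j)) x"
    then have xX: "x \<in> X"
      and h2: "\<forall>y \<in> X. norm (K x - K (ph j)) \<le> norm (K y - K (ph j))"
      and h3: "\<forall>y \<in> X. (\<forall>w \<in> X. norm (K y - K (ph j)) \<le> norm (K w - K (ph j))) \<longrightarrow> L2norm \<Omega> x \<le> L2norm \<Omega> y"
      unfolding is_mnls_def by auto
    obtain c where c: "x = F c" using xX X_iff by blast
    have "norm (K x - K (ph j)) \<le> norm (K (F (pv j)) - K (ph j))" using h2 F_in by blast
    then have "K x = K (ph j)" using KFpv by simp
    then have Kc: "Kc c = K (ph j)" using c K_F by simp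
    have "\<forall>w \<in> X. norm (K (F (pv j)) - K (ph j)) \<le> norm (K w - K (ph j))" using KFpv by simp
    then have "L2norm \<Omega> x \<le> L2norm \<Omega> (F (pv j))" using h3 F_in by blast
    then have "sqrt (ipn n c c) \<le> sqrt (ipn n (pv j) (pv j))" using c L2F by simp
    then have "ipn n c c \<le> ipn n (pv j) (pv j)" by simp
    then have "ipn n (\<lambda>i. c i - pv j i) (\<lambda>i. c i - pv j i) \<le> 0" using decomp[OF j Kc] by simp
    then have z0: "ipn n (\<lambda>i. c i - pv j i) (\<lambda>i. c i - pv j i) = 0"
      using ipn_nonneg[of n "\<lambda>i. c i - pv j i"] by linarith
    have "\<forall>i<n. c i = pv j i"
    proof (intro allI impI)
      fix i assume "i < n"
      from ipn_zero[OF z0 this] show "c i = pv j i" by simp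
    qed
    then show "x = F (pv j)" using c F_eq by simp
  next
    assume x: "x = F (pv j)"
    show "is_mnls \<Omega> X K (K (ph j)) x"
      unfolding is_mnls_def
    proof (intro conjI ballI impI)
      show "x \<in> X" using x by simp
    next
      fix y assume "y \<in> X"
      show "norm (K x - K (ph j)) \<le> norm (K y - K (ph j))" using x KFpv by simp
    next
      fix y assume yX: "y \<in> X" and hy: "\<forall>w \<in> X. norm (K y - K (ph j)) \<le> norm (K w - K (ph j))"
      obtain c where c: "y = F c" using yX X_iff by blast
      have "norm (K y - K (ph j)) \<le> norm (K (F (pv j)) - K (ph j))" using hy F_in by blast
      then have "K y = K (ph j)" using KFpv by simp
      then have Kc: "Kc c = K (ph j)" using c K_F by simp
      have "ipn n (pv j) (pv j) \<le> ipn n c c"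
        using decomp[OF j Kc] ipn_nonneg[of n "\<lambda>i. c i - pv j i"] by linarith
      then show "L2norm \<Omega> x \<le> L2norm \<Omega> y" using x c L2F by simp
    qed
  qed
  have part1: "\<exists>!x. is_mnls \<Omega> X K (K (ph j)) x"
    by (simp add: mn)
  have cj: "(1 / sqrt A - PN (ph j) (z j)) / sqrt (1 - (L2norm \<Omega> (PN (ph j)))\<^sup>2) = P (ph j) (z j) / L2norm \<Omega> (P (ph j))"
    using PNz[of j] phz[OF j] sq1[OF j] by simp
  have ci: "PN (ph j) (z i) / sqrt (1 - (L2norm \<Omega> (PN (ph i)))\<^sup>2) = - (P (ph j) (z i) / L2norm \<Omega> (P (ph i)))"
    if "i < n" "i \<noteq> j" for i
    using PNz[of i] phz[OF that(1)] sq1[OF that(1)] that by simp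
  have part2: "the_inv_into X W xs =
         (\<lambda>p. sqrt A * (\<Sum>i<n. (P (ph j) (z i) / L2norm \<Omega> (P (ph i))) * ph i p)) \<and>
       (\<lambda>p. sqrt A * (\<Sum>i<n. (P (ph j) (z i) / L2norm \<Omega> (P (ph i))) * ph i p)) =
         (\<lambda>p. sqrt A * (((1 / sqrt A - PN (ph j) (z j)) / sqrt (1 - (L2norm \<Omega> (PN (ph j)))\<^sup>2)) * ph j p)
         - sqrt A * (\<Sum>i\<in>{..<n} - {j}.
              (PN (ph j) (z i) / sqrt (1 - (L2norm \<Omega> (PN (ph i)))\<^sup>2)) * ph i p))"
    if xs: "is_mnls \<Omega> X K (K (ph j)) xs" for xs
  proof
    have xsF: "xs = F (pv j)" using mn xs by blast
    have inj: "inj_on W X"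
    proof (rule inj_onI)
      fix x y assume "x \<in> X" "y \<in> X" "W x = W y"
      then obtain c d where cd: "x = F c" "y = F d" using X_iff by blast
      then have "F (\<lambda>i. c i * L2norm \<Omega> (P (ph i))) = F (\<lambda>i. d i * L2norm \<Omega> (P (ph i)))"
        using \<open>W x = W y\<close> W_F by simp
      then have "\<forall>i<n. c i * L2norm \<Omega> (P (ph i)) = d i * L2norm \<Omega> (P (ph i))" unfolding F_eq .
      then have "\<forall>i<n. c i = d i" using spos by (metis less_irrefl mult_right_cancel)
      then show "x = y" using cd F_eq by simp
    qed
    have "W (F (\<lambda>i. pv j i / L2norm \<Omega> (P (ph i)))) = F (\<lambda>i. pv j i / L2norm \<Omega> (P (ph i)) * L2norm \<Omega> (P (ph i)))"
      by (rule W_F)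
    also have "\<dots> = F (pv j)" unfolding F_eq
    proof (intro allI impI)
      fix i assume "i < n"
      then show "pv j i / L2norm \<Omega> (P (ph i)) * L2norm \<Omega> (P (ph i)) = pv j i" using spos[of i] by simp
    qed
    finally have Wx: "W (F (\<lambda>i. pv j i / L2norm \<Omega> (P (ph i)))) = xs" using xsF by simp
    have "the_inv_into X W xs = F (\<lambda>i. pv j i / L2norm \<Omega> (P (ph i)))"
      unfolding Wx[symmetric] by (rule the_inv_into_f_f[OF inj F_in])
    also have "\<dots> = (\<lambda>p. sqrt A * (\<Sum>i<n. (P (ph j) (z i) / L2norm \<Omega> (P (ph i))) * ph i p))"
    proof (rule ext)
      fix p
      have "F (\<lambda>i. pv j i / L2norm \<Omega> (P (ph i))) p = (\<Sum>i<n. (pv j i / L2norm \<Omega> (P (ph i))) * ph i p)"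
        by (simp add: fnc_def)
      also have "\<dots> = (\<Sum>i<n. sqrt A * ((P (ph j) (z i) / L2norm \<Omega> (P (ph i))) * ph i p))"
        by (rule sum.cong) (use Pz sqA in auto)
      also have "\<dots> = sqrt A * (\<Sum>i<n. (P (ph j) (z i) / L2norm \<Omega> (P (ph i))) * ph i p)"
        by (simp add: sum_distrib_left)
      finally show "F (\<lambda>i. pv j i / L2norm \<Omega> (P (ph i))) p = sqrt A * (\<Sum>i<n. (P (ph j) (z i) / L2norm \<Omega> (P (ph i))) * ph i p)" .
    qed
    finally show "the_inv_into X W xs = (\<lambda>p. sqrt A * (\<Sum>i<n. (P (ph j) (z i) / L2norm \<Omega> (P (ph i))) * ph i p))" .
  next
    show "(\<lambda>p. sqrt A * (\<Sum>i<n. (P (ph j) (z i) / L2norm \<Omega> (P (ph i))) * ph i p)) =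
         (\<lambda>p. sqrt A * (((1 / sqrt A - PN (ph j) (z j)) / sqrt (1 - (L2norm \<Omega> (PN (ph j)))\<^sup>2)) * ph j p)
         - sqrt A * (\<Sum>i\<in>{..<n} - {j}.
              (PN (ph j) (z i) / sqrt (1 - (L2norm \<Omega> (PN (ph i)))\<^sup>2)) * ph i p))"
    proof (rule ext)
      fix p
      let ?c = "\<lambda>i. P (ph j) (z i) / L2norm \<Omega> (P (ph i))"
      have "(\<Sum>i<n. ?c i * ph i p) = ?c j * ph j p + (\<Sum>i\<in>{..<n} - {j}. ?c i * ph i p)"
        using j by (subst sum.remove[of "{..<n}" j]) auto
      moreover have "(\<Sum>i\<in>{..<n} - {j}. (PN (ph j) (z i) / sqrt (1 - (L2norm \<Omega> (PN (ph i)))\<^sup>2)) * ph i p)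
          = (\<Sum>i\<in>{..<n} - {j}. - (?c i * ph i p))"
        by (rule sum.cong) (use ci in auto)
      ultimately show "sqrt A * (\<Sum>i<n. ?c i * ph i p) =
         sqrt A * (((1 / sqrt A - PN (ph j) (z j)) / sqrt (1 - (L2norm \<Omega> (PN (ph j)))\<^sup>2)) * ph j p)
         - sqrt A * (\<Sum>i\<in>{..<n} - {j}.
              (PN (ph j) (z i) / sqrt (1 - (L2norm \<Omega> (PN (ph i)))\<^sup>2)) * ph i p)"
        using cj by (simp add: sum_negf algebra_simps)
    qed
  qed
  have part3: "P (ph j) (z j) / L2norm \<Omega> (P (ph j)) > P (ph j) (z i) / L2norm \<Omega> (P (ph i)) \<and>
       (1 / sqrt A - PN (ph j) (z j)) / sqrt (1 - (L2norm \<Omega> (PN (ph j)))\<^sup>2)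
         > - PN (ph j) (z i) / sqrt (1 - (L2norm \<Omega> (PN (ph i)))\<^sup>2)"
    if i: "i < n" "i \<noteq> j" for i
  proof -
    define a where "a = sqrt (pv j j)"
    define b where "b = sqrt (pv i i)"
    have a0: "a > 0" using pv_pos[OF j] K_nz j by (simp add: a_def)
    have b0: "b > 0" using pv_pos[OF i(1)] K_nz i by (simp add: b_def)
    have aa: "ipn n (pv j) (pv j) = a * a" using ipn_pv_pv[OF j, of j] pv_pos[OF j] K_nz j by (simp add: a_def)
    have bb: "ipn n (pv i) (pv i) = b * b" using ipn_pv_pv[OF i(1), of i] pv_pos[OF i(1)] K_nz i by (simp add: b_def)
    have np: "\<not> (\<forall>k<n. b * pv j k = a * pv i k)"
    proof
      assume "\<forall>k<n. b * pv j k = a * pv i k"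
      then have "Kc (\<lambda>k. b * pv j k) = Kc (\<lambda>k. a * pv i k)" by (intro Kc_cong) auto
      then have "b *\<^sub>R K (ph j) = a *\<^sub>R K (ph i)" unfolding Kc_scale Kc_pv[OF j] Kc_pv[OF i(1)] .
      then have eq: "b *\<^sub>R K (ph j) = a *\<^sub>R K (ph i)" .
      have "K (ph j) = (1 / b) *\<^sub>R (b *\<^sub>R K (ph j))" using b0 by simp
      also have "\<dots> = (1 / b) *\<^sub>R (a *\<^sub>R K (ph i))" using eq by simp
      also have "\<dots> = (a / b) *\<^sub>R K (ph i)" by simp
      finally have "K (ph j) = (a / b) *\<^sub>R K (ph i)" .
      then show False using K_nonpar j i by blast
    qed
    have cs: "pv j i < a * b" using strict_cs[OF a0 b0 aa bb np] ipn_pv_pv[OF i(1), of j] by simp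
    have ajj: "pv j j = a * a" using aa ipn_pv_pv[OF j, of j] by simp
    have n1: "L2norm \<Omega> (P (ph j)) = a" using L2n_P[OF j] unfolding a_def .
    have n2: "P (ph j) (z j) = a * a / sqrt A" using Pz[OF j] unfolding ajj .
    have "P (ph j) (z j) / L2norm \<Omega> (P (ph j)) = (a * a / sqrt A) / a"
      unfolding n1 n2 ..
    also have "\<dots> = a / sqrt A" using a0 by simp
    finally have lhs: "P (ph j) (z j) / L2norm \<Omega> (P (ph j)) = a / sqrt A" .
    have rhs: "P (ph j) (z i) / L2norm \<Omega> (P (ph i)) = pv j i / (sqrt A * b)"
      using Pz[OF i(1)] L2n_P[OF i(1)] unfolding b_def[symmetric] by simp
    have "pv j i / (sqrt A * b) < (a * b) / (sqrt A * b)"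
      using cs sqA b0 by (intro divide_strict_right_mono) auto
    also have "(a * b) / (sqrt A * b) = a / sqrt A" using b0 by simp
    finally have first: "P (ph j) (z j) / L2norm \<Omega> (P (ph j)) > P (ph j) (z i) / L2norm \<Omega> (P (ph i))"
      using lhs rhs by simp
    have "- PN (ph j) (z i) / sqrt (1 - (L2norm \<Omega> (PN (ph i)))\<^sup>2) = P (ph j) (z i) / L2norm \<Omega> (P (ph i))"
      using ci[OF i] by (simp add: minus_divide_left[symmetric])
    then show ?thesis using first cj by simp
  qed
  show ?thesis using part1 part2 part3 by blast
qed

end

theorem mainTheorem5:
  fixes \<Omega> :: "(real^'d) set" and cells :: "nat \<Rightarrow> (real^'d) set" and n :: nat and A :: real
    and K :: "(real^'d \<Rightarrow> real) \<Rightarrow> 'b::real_inner" and j :: nat and z :: "nat \<Rightarrow> real^'d"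
  defines "\<phi> \<equiv> cellfun A cells"
  defines "X \<equiv> cellspan A cells n"
  defines "P \<equiv> projP \<Omega> X K"
  defines "PN \<equiv> projPN \<Omega> X K"
  defines "W \<equiv> weightW \<Omega> A cells n X K"
  assumes dom: "lipschitz_domain \<Omega>"
    and cells_sub: "\<forall>i<n. cells i \<subseteq> \<Omega>"
    and cells_meas: "\<forall>i<n. cells i \<in> sets lebesgue \<and> measure lebesgue (cells i) = A"
    and cells_disj: "\<forall>i<n. \<forall>k<n. i \<noteq> k \<longrightarrow> cells i \<inter> cells k = {}"
    and A_pos: "A > 0"
    and K_lin: "\<forall>x\<in>X. \<forall>y\<in>X. \<forall>a b. K (\<lambda>p. a * x p + b * y p) = a *\<^sub>R K x + b *\<^sub>R K y"
    and K_nonpar: "\<forall>i<n. \<forall>k<n. i \<noteq> k \<longrightarrow> (\<forall>c::real. K (\<phi> i) \<noteq> c *\<^sub>R K (\<phi> k))"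
    and K_nz: "\<forall>i<n. K (\<phi> i) \<noteq> 0"
    and j: "j < n"
    and z: "\<forall>i<n. z i \<in> cells i"
  shows "(\<exists>!x. is_mnls \<Omega> X K (K (\<phi> j)) x) \<and>
    (\<forall>xs. is_mnls \<Omega> X K (K (\<phi> j)) xs \<longrightarrow>
       the_inv_into X W xs =
         (\<lambda>p. sqrt A * (\<Sum>i<n. (P (\<phi> j) (z i) / L2norm \<Omega> (P (\<phi> i))) * \<phi> i p)) \<and>
       (\<lambda>p. sqrt A * (\<Sum>i<n. (P (\<phi> j) (z i) / L2norm \<Omega> (P (\<phi> i))) * \<phi> i p)) =
         (\<lambda>p. sqrt A * (((1 / sqrt A - PN (\<phi> j) (z j)) / sqrt (1 - (L2norm \<Omega> (PN (\<phi> j)))\<^sup>2)) * \<phi> j p)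
         - sqrt A * (\<Sum>i\<in>{..<n} - {j}.
              (PN (\<phi> j) (z i) / sqrt (1 - (L2norm \<Omega> (PN (\<phi> i)))\<^sup>2)) * \<phi> i p))) \<and>
    (\<forall>i<n. i \<noteq> j \<longrightarrow>
       P (\<phi> j) (z j) / L2norm \<Omega> (P (\<phi> j)) > P (\<phi> j) (z i) / L2norm \<Omega> (P (\<phi> i)) \<and>
       (1 / sqrt A - PN (\<phi> j) (z j)) / sqrt (1 - (L2norm \<Omega> (PN (\<phi> j)))\<^sup>2)
         > - PN (\<phi> j) (z i) / sqrt (1 - (L2norm \<Omega> (PN (\<phi> i)))\<^sup>2))"
  proof -
  have csI: "cs \<Omega> cells n A K z"
    by (rule cs.intro[OF cells_sub cells_meas cells_disj A_pos _ z]) (use K_lin[unfolded X_def] in blast)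
  interpret cs \<Omega> cells n A K z by (rule csI)
  show ?thesis
    unfolding \<phi>_def X_def P_def PN_def W_def
    by (rule main[OF K_nonpar[unfolded \<phi>_def] K_nz[unfolded \<phi>_def] j])
qed

end
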